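(* Fix $\gamma\in(0,1)$ and set $\alpha^{\oplus}=\sqrt{\frac{1+\sqrt{1-\gamma}}{2\pi^2}}$, $\alpha^{\ominus}=\sqrt{\frac{1-\sqrt{1-\gamma}}{2\pi^2}}$. For $\varepsilon>0$ let $\Lambda=\{k\in\mathbb{N}:\lceil\alpha^{\ominus}/\varepsilon\rceil\le k\le\lfloor\alpha^{\oplus}/\varepsilon\rfloor\}$, let $(c_k)_{k\in\Lambda}$ be independent standard normal random variables, and define $f(x)=\sum_{k\in\Lambda}c_k\sqrt{2}\cos(k\pi x)$ for $x\in[0,1]$. Then for any choice of $\delta>0$ and any $q>1$ there exists a constant $C>0$, independent of $\varepsilon$, such that $$\mathbb{P}\Big(\|f\|_{L^\infty(0,1)}\le\varepsilon^{-\delta}\|f\|_{L^2(0,1)}\Big)\ge1-C\varepsilon^q .$$ *)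

theory Defs
  imports "HOL-Probability.Probability"
begin

definition alpha_plus :: "real \<Rightarrow> real" where
  "alpha_plus \<gamma> = sqrt ((1 + sqrt (1 - \<gamma>)) / (2 * pi ^ 2))"

definition alpha_minus :: "real \<Rightarrow> real" where
  "alpha_minus \<gamma> = sqrt ((1 - sqrt (1 - \<gamma>)) / (2 * pi ^ 2))"

definition Lambda :: "real \<Rightarrow> real \<Rightarrow> nat set" where
  "Lambda \<gamma> \<epsilon> = {k. \<lceil>alpha_minus \<gamma> / \<epsilon>\<rceil> \<le> int k \<and> int k \<le> \<lfloor>alpha_plus \<gamma> / \<epsilon>\<rfloor>}"

definition rand_f :: "nat set \<Rightarrow> (nat \<Rightarrow> real) \<Rightarrow> real \<Rightarrow> real" where
  "rand_f \<Lambda> c x = (\<Sum>k\<in>\<Lambda>. c k * sqrt 2 * cos (real k * pi * x))"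

(* L^\<infinity>(0,1) norm; for continuous functions (as here) the essential sup equals the sup *)
definition Linf_norm01 :: "(real \<Rightarrow> real) \<Rightarrow> real" where
  "Linf_norm01 f = (SUP x\<in>{0<..<1}. \<bar>f x\<bar>)"

definition L2_norm01 :: "(real \<Rightarrow> real) \<Rightarrow> real" where
  "L2_norm01 f = sqrt (set_lebesgue_integral lborel {0<..<1} (\<lambda>x. (f x)\<^sup>2))"

end

theory Submission
  imports Defs
begin


lemma std_normal_exp_lin:
  "std_normal_density x * exp (s * x) = exp (s^2/2) * normal_density s 1 x"
proof -
  have "exp (- x\<^sup>2 / 2) * exp (s * x) = exp (s^2/2) * exp (- (x - s)\<^sup>2 / 2)"
    by (simp add: exp_add[symmetric] power2_eq_square field_simps)
  then show ?thesis unfolding normal_density_def by simp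
qed

lemma integrable_std_normal_exp_lin:
  "integrable lborel (\<lambda>x. std_normal_density x * exp (s * x))"
  unfolding std_normal_exp_lin by simp

lemma integral_std_normal_exp_lin:
  "(\<integral>x. std_normal_density x * exp (s * x) \<partial>lborel) = exp (s^2/2)"
  unfolding std_normal_exp_lin by simp

lemma std_normal_exp_sq:
  "std_normal_density x * exp (- (x^2)) = (1 / sqrt 3) * normal_density 0 (1 / sqrt 3) x"
proof -
  have "exp (- x\<^sup>2 / 2) * exp (- (x^2)) = exp (- (x - 0)\<^sup>2 / (2 * (1/sqrt 3)^2))"
    by (simp add: exp_add[symmetric] power_divide)
  moreover have "1 / sqrt (2 * pi * (1 / sqrt 3)\<^sup>2) = sqrt 3 * (1 / sqrt (2*pi))"
    by (simp add: power_divide real_sqrt_divide real_sqrt_mult)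
  ultimately show ?thesis unfolding normal_density_def by simp
qed

lemma integrable_std_normal_exp_sq:
  "integrable lborel (\<lambda>x. std_normal_density x * exp (- (x^2)))"
  unfolding std_normal_exp_sq by simp

lemma integral_std_normal_exp_sq:
  "(\<integral>x. std_normal_density x * exp (- (x^2)) \<partial>lborel) = 1 / sqrt 3"
  unfolding std_normal_exp_sq by simp



context prob_space begin

lemma indep_prod_expect:
  assumes I: "finite I" and ind: "indep_vars (\<lambda>_. borel) c I"
    and dist: "\<forall>k\<in>I. distributed M lborel (c k) std_normal_density"
    and gm: "\<And>k. k \<in> I \<Longrightarrow> g k \<in> borel_measurable borel"
    and gi: "\<And>k. k \<in> I \<Longrightarrow> integrable lborel (\<lambda>x. std_normal_density x * g k x)"
  shows "(\<integral>\<omega>. (\<Prod>k\<in>I. g k (c k \<omega>)) \<partial>M) = (\<Prod>k\<in>I. \<integral>x. std_normal_density x * g k x \<partial>lborel)"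
    and "integrable M (\<lambda>\<omega>. \<Prod>k\<in>I. g k (c k \<omega>))"
proof -
  have ind2: "indep_vars (\<lambda>_. borel) (\<lambda>k \<omega>. g k (c k \<omega>)) I"
    by (rule indep_vars_compose2[OF ind]) (use gm in auto)
  have int: "integrable M (\<lambda>\<omega>. g k (c k \<omega>))" if "k \<in> I" for k
    using distributed_integrable[of M lborel "c k" std_normal_density "g k"] dist gm gi that by auto
  show "(\<integral>\<omega>. (\<Prod>k\<in>I. g k (c k \<omega>)) \<partial>M) = (\<Prod>k\<in>I. \<integral>x. std_normal_density x * g k x \<partial>lborel)"
    apply (subst indep_vars_lebesgue_integral[OF I ind2 int], assumption)
    apply (rule prod.cong, simp)
    using distributed_integral[of M lborel "c k" std_normal_density "g k" for k] dist gm by auto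
  show "integrable M (\<lambda>\<omega>. \<Prod>k\<in>I. g k (c k \<omega>))"
    by (rule indep_vars_integrable[OF I ind2 int])
qed

lemma gauss_tail:
  assumes I: "finite I" and ind: "indep_vars (\<lambda>_. borel) c I"
    and dist: "\<forall>k\<in>I. distributed M lborel (c k) std_normal_density"
    and V: "(\<Sum>k\<in>I. (w k)^2) \<le> V" "0 < V" and t: "0 < t"
  shows "measure M {\<omega>\<in>space M. t \<le> (\<Sum>k\<in>I. w k * c k \<omega>)} \<le> exp (-(t^2)/(2*V))"
proof -
  define l where "l = t / V"
  have l: "0 < l" using V t by (simp add: l_def)
  have cm[measurable]: "c k \<in> borel_measurable M" if "k \<in> I" for k
    using dist that distributed_measurable by fastforce
  have eqprod: "exp (l * (\<Sum>k\<in>I. w k * c k \<omega>)) = (\<Prod>k\<in>I. (\<lambda>x. exp ((l * w k) * x)) (c k \<omega>))" for \<omega>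
    using I by (simp add: exp_sum sum_distrib_left mult.assoc)
  have pe: "(\<integral>\<omega>. (\<Prod>k\<in>I. (\<lambda>x. exp ((l * w k) * x)) (c k \<omega>)) \<partial>M) = (\<Prod>k\<in>I. exp ((l * w k)^2/2))"
    and pint: "integrable M (\<lambda>\<omega>. \<Prod>k\<in>I. (\<lambda>x. exp ((l * w k) * x)) (c k \<omega>))"
    using indep_prod_expect[OF I ind dist, of "\<lambda>k x. exp ((l * w k) * x)"]
    by (auto simp: integral_std_normal_exp_lin integrable_std_normal_exp_lin)
  have "{\<omega>\<in>space M. t \<le> (\<Sum>k\<in>I. w k * c k \<omega>)} = {\<omega>\<in>space M. exp (l*t) \<le> (\<Prod>k\<in>I. (\<lambda>x. exp ((l * w k) * x)) (c k \<omega>))}"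
    using l by (auto simp: eqprod[symmetric])
  then have "measure M {\<omega>\<in>space M. t \<le> (\<Sum>k\<in>I. w k * c k \<omega>)} \<le> (\<Prod>k\<in>I. exp ((l * w k)^2/2)) / exp (l*t)"
    using integral_Markov_inequality_measure[OF pint, of "space M" "exp (l*t)"] pe
    by (simp add: prod_nonneg)
  also have "(\<Prod>k\<in>I. exp ((l * w k)^2/2)) = exp (l^2 * (\<Sum>k\<in>I. (w k)^2) / 2)"
    using I by (simp add: exp_sum[symmetric] sum_distrib_left sum_divide_distrib power_mult_distrib)
  also have "\<dots> \<le> exp (l^2 * V / 2)"
    using V by (simp add: mult_left_mono)
  also have "exp (l^2 * V / 2) / exp (l*t) = exp (-(t^2)/(2*V))"
    using V by (simp add: exp_diff[symmetric] l_def field_simps power2_eq_square)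
  finally show ?thesis by (simp add: divide_right_mono)
qed

lemma chi_lower:
  assumes I: "finite I" and ind: "indep_vars (\<lambda>_. borel) c I"
    and dist: "\<forall>k\<in>I. distributed M lborel (c k) std_normal_density"
  shows "measure M {\<omega>\<in>space M. (\<Sum>k\<in>I. (c k \<omega>)^2) \<le> card I / 2} \<le> exp (- ((ln 3 - 1)/2) * card I)"
proof -
  have cm[measurable]: "c k \<in> borel_measurable M" if "k \<in> I" for k
    using dist that distributed_measurable by fastforce
  have eqprod: "exp (- (\<Sum>k\<in>I. (c k \<omega>)^2)) = (\<Prod>k\<in>I. (\<lambda>x. exp (- (x^2))) (c k \<omega>))" for \<omega>
    using I by (simp add: exp_sum sum_negf[symmetric])
  have pe: "(\<integral>\<omega>. (\<Prod>k\<in>I. (\<lambda>x. exp (- (x^2))) (c k \<omega>)) \<partial>M) = (\<Prod>k\<in>I. 1 / sqrt 3)"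
    and pint: "integrable M (\<lambda>\<omega>. \<Prod>k\<in>I. (\<lambda>x. exp (- (x^2))) (c k \<omega>))"
    using indep_prod_expect[OF I ind dist, of "\<lambda>k x. exp (- (x^2))"]
    by (auto simp: integral_std_normal_exp_sq integrable_std_normal_exp_sq)
  have "{\<omega>\<in>space M. (\<Sum>k\<in>I. (c k \<omega>)^2) \<le> card I / 2} = {\<omega>\<in>space M. exp (- (card I / 2)) \<le> (\<Prod>k\<in>I. (\<lambda>x. exp (- (x^2))) (c k \<omega>))}"
    by (auto simp: eqprod[symmetric])
  then have "measure M {\<omega>\<in>space M. (\<Sum>k\<in>I. (c k \<omega>)^2) \<le> card I / 2} \<le> (\<Prod>k\<in>I. 1 / sqrt 3) / exp (- (card I / 2))"
    using integral_Markov_inequality_measure[OF pint, of "space M" "exp (- (card I / 2))"] pe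
    by (simp add: prod_nonneg)
  also have "(\<Prod>k\<in>I. 1 / sqrt (3::real)) / exp (- (card I / 2)) = exp (- ((ln 3 - 1)/2) * card I)"
  proof -
    have s3: "sqrt (3::real) = exp (ln 3 / 2)"
      using powr_half_sqrt[of 3] by (simp add: powr_def)
    have "1 / sqrt (3::real) = exp (- ln 3 / 2)"
      unfolding s3 by (simp add: exp_minus inverse_eq_divide)
    then have "(\<Prod>k\<in>I. 1 / sqrt (3::real)) = exp (- ln 3 / 2 * card I)"
      by (simp add: exp_of_nat_mult[symmetric] mult.commute)
    then have "(\<Prod>k\<in>I. 1 / sqrt (3::real)) / exp (- (card I / 2)) = exp (- ln 3 / 2 * card I - (- (card I / 2)))"
      by (simp only: exp_diff)
    also have "\<dots> = exp (- ((ln 3 - 1)/2) * card I)"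
      by (rule arg_cong[where f=exp]) (simp add: field_simps)
    finally show ?thesis .
  qed
  finally show ?thesis .
qed

end


lemma exp_ge_pow_fact:
  assumes "0 \<le> (y::real)"
  shows "y ^ m / fact m \<le> exp y"
proof -
  have "(\<Sum>n\<in>{m}. y ^ n /\<^sub>R fact n) \<le> (\<Sum>n. y ^ n /\<^sub>R fact n)"
    by (rule sum_le_suminf[OF summable_exp_generic]) (use assms in auto)
  then show ?thesis by (simp add: exp_def divide_inverse mult.commute)
qed

lemma exp_neg_le_fact:
  assumes "0 < (y::real)"
  shows "exp (- y) \<le> fact m / y ^ m"
proof -
  have "y ^ m / fact m \<le> exp y" using exp_ge_pow_fact assms by simp
  then have "y ^ m \<le> exp y * fact m" by (simp add: divide_le_eq)
  then show ?thesis using assms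
    by (simp add: exp_minus field_simps)
qed

definition G :: "int \<Rightarrow> real \<Rightarrow> real" where
  "G m x = (if m = 0 then x else sin (of_int m * pi * x) / (of_int m * pi))"

lemma G_deriv: "(G m has_real_derivative cos (of_int m * pi * x)) (at x)"
proof (cases "m = 0")
  case True
  then show ?thesis unfolding G_def by (auto intro!: derivative_eq_intros)
next
  case False
  then show ?thesis unfolding G_def
    by (auto intro!: derivative_eq_intros)
qed

lemma G_diff: "G m 1 - G m 0 = (if m = 0 then 1 else 0)"
proof -
  have "sin (of_int m * pi) = 0" by (simp add: sin_zero_iff_int2)
  then show ?thesis by (simp add: G_def)
qed

lemma sq_rand_f:
  assumes "finite \<Lambda>"
  shows "(rand_f \<Lambda> a x)^2 = (\<Sum>j\<in>\<Lambda>. \<Sum>k\<in>\<Lambda>. a j * a k *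
     (cos (of_int (int j - int k) * pi * x) + cos (of_int (int j + int k) * pi * x)))"
proof -
  have "(rand_f \<Lambda> a x)^2 = (\<Sum>j\<in>\<Lambda>. \<Sum>k\<in>\<Lambda>. (a j * sqrt 2 * cos (real j * pi * x)) * (a k * sqrt 2 * cos (real k * pi * x)))"
    unfolding rand_f_def power2_eq_square sum_product by simp
  also have "\<dots> = (\<Sum>j\<in>\<Lambda>. \<Sum>k\<in>\<Lambda>. a j * a k *
     (cos (of_int (int j - int k) * pi * x) + cos (of_int (int j + int k) * pi * x)))"
  proof (intro sum.cong refl)
    fix j k
    have "cos (real j * pi * x) * cos (real k * pi * x) = (cos (real j * pi * x - real k * pi * x) + cos (real j * pi * x + real k * pi * x)) / 2"
      by (rule cos_times_cos)
    moreover have "real j * pi * x - real k * pi * x = of_int (int j - int k) * pi * x"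
      by (simp add: algebra_simps)
    moreover have "real j * pi * x + real k * pi * x = of_int (int j + int k) * pi * x"
      by (simp add: algebra_simps)
    moreover have e: "(a j * sqrt 2 * X) * (a k * sqrt 2 * Y) = a j * a k * (2*(X*Y))" for X Y :: real
    proof -
      have "(a j * sqrt 2 * X) * (a k * sqrt 2 * Y) = a j * a k * ((sqrt 2 * sqrt 2)*(X*Y))" by (simp only: ac_simps)
      then show ?thesis by simp
    qed
    ultimately show "(a j * sqrt 2 * cos (real j * pi * x)) * (a k * sqrt 2 * cos (real k * pi * x)) = a j * a k *
     (cos (of_int (int j - int k) * pi * x) + cos (of_int (int j + int k) * pi * x))"
      by (simp only: e)
  qed
  finally show ?thesis .
qed

lemma L2_rand_f:
  assumes fin: "finite \<Lambda>" and pos: "\<forall>k\<in>\<Lambda>. 1 \<le> k"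
  shows "L2_norm01 (rand_f \<Lambda> a) = sqrt (\<Sum>k\<in>\<Lambda>. (a k)^2)"
proof -
  define F where "F x = (\<Sum>j\<in>\<Lambda>. \<Sum>k\<in>\<Lambda>. a j * a k * (G (int j - int k) x + G (int j + int k) x))" for x
  have "(LBINT x=ereal 0..ereal 1. (rand_f \<Lambda> a x)^2) = F 1 - F 0"
  proof (rule interval_integral_FTC_finite)
    show "continuous_on {min 0 1..max 0 1} (\<lambda>x. (rand_f \<Lambda> a x)^2)"
      unfolding rand_f_def by (intro continuous_intros)
    fix x :: real
    have "(F has_real_derivative (\<Sum>j\<in>\<Lambda>. \<Sum>k\<in>\<Lambda>. a j * a k *
     (cos (of_int (int j - int k) * pi * x) + cos (of_int (int j + int k) * pi * x)))) (at x)"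
      unfolding F_def
      by (intro DERIV_sum DERIV_cmult DERIV_add G_deriv)
    then show "(F has_vector_derivative (rand_f \<Lambda> a x)^2) (at x within {min 0 1..max 0 1})"
      unfolding sq_rand_f[OF fin]
      by (simp add: has_real_derivative_iff_has_vector_derivative[symmetric] has_field_derivative_at_within)
  qed
  also have "F 1 - F 0 = (\<Sum>j\<in>\<Lambda>. \<Sum>k\<in>\<Lambda>. a j * a k * ((G (int j - int k) 1 - G (int j - int k) 0) + (G (int j + int k) 1 - G (int j + int k) 0)))"
    unfolding F_def by (simp add: sum_subtractf[symmetric] algebra_simps)
  also have "\<dots> = (\<Sum>j\<in>\<Lambda>. \<Sum>k\<in>\<Lambda>. if k = j then a j * a k else 0)"
  proof (intro sum.cong refl)
    fix j k assume "j \<in> \<Lambda>" "k \<in> \<Lambda>"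
    then have "int j + int k \<noteq> 0" using pos by auto
    then show "a j * a k * ((G (int j - int k) 1 - G (int j - int k) 0) + (G (int j + int k) 1 - G (int j + int k) 0)) = (if k = j then a j * a k else 0)"
      unfolding G_diff by auto
  qed
  also have "\<dots> = (\<Sum>k\<in>\<Lambda>. (a k)^2)"
    using fin by (simp add: power2_eq_square)
  finally have "(LBINT x=ereal 0..ereal 1. (rand_f \<Lambda> a x)^2) = (\<Sum>k\<in>\<Lambda>. (a k)^2)" .
  then have "set_lebesgue_integral lborel {0<..<1} (\<lambda>x. (rand_f \<Lambda> a x)^2) = (\<Sum>k\<in>\<Lambda>. (a k)^2)"
    by (simp add: interval_integral_Ioo)
  then show ?thesis unfolding L2_norm01_def by simp
qed



lemma cos_lip: "\<bar>cos u - cos v\<bar> \<le> \<bar>u - v\<bar>" for u v :: real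
proof -
  have "\<bar>cos u - cos v\<bar> = 2 * \<bar>sin ((u + v) / 2)\<bar> * \<bar>sin ((v - u) / 2)\<bar>"
    unfolding cos_diff_cos by (simp add: abs_mult)
  also have "\<dots> \<le> 2 * 1 * \<bar>(v - u) / 2\<bar>"
    by (intro mult_mono abs_sin_x_le_abs_x) auto
  finally show ?thesis by simp
qed

lemma rand_f_lip:
  assumes fin: "finite \<Lambda>" and K: "\<forall>k\<in>\<Lambda>. real k \<le> K"
  shows "\<bar>rand_f \<Lambda> a x - rand_f \<Lambda> a y\<bar> \<le> (\<Sum>k\<in>\<Lambda>. \<bar>a k\<bar>) * (sqrt 2 * K * pi * \<bar>x - y\<bar>)"
proof -
  have "\<bar>rand_f \<Lambda> a x - rand_f \<Lambda> a y\<bar> = \<bar>\<Sum>k\<in>\<Lambda>. a k * sqrt 2 * (cos (real k * pi * x) - cos (real k * pi * y))\<bar>"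
    unfolding rand_f_def by (simp add: sum_subtractf[symmetric] algebra_simps)
  also have "\<dots> \<le> (\<Sum>k\<in>\<Lambda>. \<bar>a k * sqrt 2 * (cos (real k * pi * x) - cos (real k * pi * y))\<bar>)"
    by (rule sum_abs)
  also have "\<dots> \<le> (\<Sum>k\<in>\<Lambda>. \<bar>a k\<bar> * (sqrt 2 * K * pi * \<bar>x - y\<bar>))"
  proof (rule sum_mono)
    fix k assume k: "k \<in> \<Lambda>"
    have "\<bar>cos (real k * pi * x) - cos (real k * pi * y)\<bar> \<le> \<bar>real k * pi * x - real k * pi * y\<bar>"
      by (rule cos_lip)
    also have "\<dots> = real k * pi * \<bar>x - y\<bar>"
      by (simp add: abs_mult right_diff_distrib[symmetric] mult.assoc)
    also have "\<dots> \<le> K * pi * \<bar>x - y\<bar>"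
      using K k by (intro mult_right_mono) auto
    finally have "\<bar>cos (real k * pi * x) - cos (real k * pi * y)\<bar> \<le> K * pi * \<bar>x - y\<bar>" .
    then have "\<bar>a k\<bar> * sqrt 2 * \<bar>cos (real k * pi * x) - cos (real k * pi * y)\<bar> \<le> \<bar>a k\<bar> * sqrt 2 * (K * pi * \<bar>x - y\<bar>)"
      by (intro mult_left_mono) auto
    then show "\<bar>a k * sqrt 2 * (cos (real k * pi * x) - cos (real k * pi * y))\<bar> \<le> \<bar>a k\<bar> * (sqrt 2 * K * pi * \<bar>x - y\<bar>)"
      by (simp add: abs_mult right_diff_distrib[symmetric] mult.assoc)
  qed
  also have "\<dots> = (\<Sum>k\<in>\<Lambda>. \<bar>a k\<bar>) * (sqrt 2 * K * pi * \<bar>x - y\<bar>)"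
    by (simp add: sum_distrib_right)
  finally show ?thesis .
qed

lemma sum_abs_le_card_norm:
  assumes fin: "finite \<Lambda>"
  shows "(\<Sum>k\<in>\<Lambda>. \<bar>a k\<bar>) \<le> card \<Lambda> * sqrt (\<Sum>k\<in>\<Lambda>. (a k)^2)"
proof -
  have "(\<Sum>k\<in>\<Lambda>. \<bar>a k\<bar>) \<le> (\<Sum>k\<in>\<Lambda>. sqrt (\<Sum>k\<in>\<Lambda>. (a k)^2))"
  proof (rule sum_mono)
    fix k assume "k \<in> \<Lambda>"
    then have "(a k)^2 \<le> (\<Sum>k\<in>\<Lambda>. (a k)^2)"
      using fin by (intro member_le_sum) auto
    then show "\<bar>a k\<bar> \<le> sqrt (\<Sum>k\<in>\<Lambda>. (a k)^2)"
      using real_sqrt_le_mono by fastforce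
  qed
  then show ?thesis by simp
qed

lemma rand_f_bdd: "bdd_above ((\<lambda>x. \<bar>rand_f \<Lambda> a x\<bar>) ` S)"
proof (cases "finite \<Lambda>")
  case True
  have "\<bar>rand_f \<Lambda> a x\<bar> \<le> (\<Sum>k\<in>\<Lambda>. \<bar>a k\<bar> * sqrt 2)" for x
  proof -
    have "\<bar>rand_f \<Lambda> a x\<bar> \<le> (\<Sum>k\<in>\<Lambda>. \<bar>a k * sqrt 2 * cos (real k * pi * x)\<bar>)"
      unfolding rand_f_def by (rule sum_abs)
    also have "\<dots> \<le> (\<Sum>k\<in>\<Lambda>. \<bar>a k\<bar> * sqrt 2)"
      by (intro sum_mono) (simp add: abs_mult mult_left_le del: mult.commute)
    finally show ?thesis .
  qed
  then show ?thesis by (intro bdd_aboveI2) blast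
next
  case False
  then have "\<bar>rand_f \<Lambda> a x\<bar> \<le> 0" for x by (simp add: rand_f_def)
  then show ?thesis by (intro bdd_aboveI2) blast
qed

lemma Linf_le_iff:
  "Linf_norm01 (rand_f \<Lambda> a) \<le> y \<longleftrightarrow> (\<forall>x\<in>{0<..<1}. \<bar>rand_f \<Lambda> a x\<bar> \<le> y)"
  unfolding Linf_norm01_def by (rule cSUP_le_iff) (auto simp: rand_f_bdd)

lemma rat_suffices:
  assumes cont: "continuous_on UNIV (f::real\<Rightarrow>real)" and H: "\<forall>x\<in>{0<..<1} \<inter> \<rat>. \<bar>f x\<bar> \<le> (y::real)"
  shows "\<forall>x\<in>{0<..<1}. \<bar>f x\<bar> \<le> y"
proof (rule ccontr)
  assume "\<not> ?thesis"
  then obtain x where x: "x \<in> {0<..<1}" "\<bar>f x\<bar> > y" by auto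
  have "continuous (at x) f" using cont by (simp add: continuous_on_eq_continuous_at)
  then obtain d where d: "d > 0" "\<forall>x'. dist x' x < d \<longrightarrow> dist (f x') (f x) < \<bar>f x\<bar> - y"
    using x(2) unfolding continuous_at_eps_delta by (meson diff_gt_0_iff_gt)
  have "max 0 (x - d) < min 1 (x + d)" using x d by auto
  then obtain r where r: "r \<in> \<rat>" "max 0 (x - d) < r" "r < min 1 (x + d)"
    using Rats_dense_in_real by blast
  then have "dist r x < d" by (auto simp: dist_real_def)
  then have "\<bar>f r - f x\<bar> < \<bar>f x\<bar> - y" using d by (auto simp: dist_real_def)
  moreover have "\<bar>f r\<bar> \<le> y" using H r by auto
  ultimately show False by linarith
qed

lemma cont_rand_f: "continuous_on UNIV (rand_f \<Lambda> a)"
  unfolding rand_f_def by (intro continuous_intros)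

lemma Linf_le_iff_rat:
  "Linf_norm01 (rand_f \<Lambda> a) \<le> y \<longleftrightarrow> (\<forall>x\<in>{0<..<1} \<inter> \<rat>. \<bar>rand_f \<Lambda> a x\<bar> \<le> y)"
  unfolding Linf_le_iff using rat_suffices[OF cont_rand_f] by blast



lemma grid_bound:
  fixes K B :: real and Mg :: nat
  assumes fin: "finite \<Lambda>" and K: "\<forall>k\<in>\<Lambda>. real k \<le> K" and Kpos: "0 \<le> K" and Mg: "1 \<le> Mg"
    and L: "real (card \<Lambda>) * (sqrt 2 * K * pi) \<le> real Mg"
    and H: "\<forall>j\<le>Mg. \<bar>rand_f \<Lambda> a (real j / real Mg)\<bar> \<le> B"
  shows "\<forall>x\<in>{0<..<1}. \<bar>rand_f \<Lambda> a x\<bar> \<le> B + sqrt (\<Sum>k\<in>\<Lambda>. (a k)^2)"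
proof
  fix x :: real assume x: "x \<in> {0<..<1}"
  define nrm where "nrm = sqrt (\<Sum>k\<in>\<Lambda>. (a k)^2)"
  have nrm0: "0 \<le> nrm" unfolding nrm_def by (simp add: sum_nonneg)
  define j where "j = nat \<lfloor>x * Mg\<rfloor>"
  have Mgp: "0 < real Mg" using Mg by simp
  have xM: "0 \<le> x * Mg" using x by simp
  have j1: "real j \<le> x * Mg" unfolding j_def using xM by linarith
  have j2: "x * Mg < real j + 1" unfolding j_def using xM by linarith
  have "x * Mg < Mg" using x Mgp by simp
  then have jM: "j \<le> Mg" using j1 by linarith
  have d1: "0 \<le> x - real j / Mg" using j1 Mgp by (simp add: field_simps)
  have "x \<le> (real j + 1) / Mg" using j2 Mgp by (simp add: pos_le_divide_eq)
  then have d2: "x - real j / Mg \<le> 1 / Mg" by (simp add: add_divide_distrib)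
  have "\<bar>rand_f \<Lambda> a x - rand_f \<Lambda> a (real j / Mg)\<bar> \<le> (\<Sum>k\<in>\<Lambda>. \<bar>a k\<bar>) * (sqrt 2 * K * pi * \<bar>x - real j / Mg\<bar>)"
    by (rule rand_f_lip[OF fin K])
  also have "\<dots> \<le> (card \<Lambda> * nrm) * (sqrt 2 * K * pi * (1 / Mg))"
    apply (intro mult_mono)
    using sum_abs_le_card_norm[OF fin, of a] d1 d2 Kpos nrm0 by (auto simp: nrm_def intro!: mult_left_mono)
  also have "\<dots> = nrm * ((card \<Lambda> * (sqrt 2 * K * pi)) / Mg)"
    by (simp add: field_simps)
  also have "\<dots> \<le> nrm * 1"
    using L Mgp nrm0 by (intro mult_left_mono) (auto simp: divide_le_eq)
  finally have "\<bar>rand_f \<Lambda> a x - rand_f \<Lambda> a (real j / Mg)\<bar> \<le> nrm" by simp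
  moreover have "\<bar>rand_f \<Lambda> a (real j / Mg)\<bar> \<le> B" using H jM by auto
  ultimately show "\<bar>rand_f \<Lambda> a x\<bar> \<le> B + nrm" by linarith
qed



lemma arith1:
  fixes \<epsilon> r d N q :: real
  assumes e: "0 < \<epsilon>" "\<epsilon> \<le> 1" and r: "0 < r" and d: "0 < d" and N: "d / \<epsilon> - 1 \<le> N"
    and q: "0 < q"
  shows "exp (- r * N) \<le> exp r * fact (nat \<lceil>q\<rceil>) / (r * d) ^ (nat \<lceil>q\<rceil>) * \<epsilon> powr q"
proof -
  define m where "m = nat \<lceil>q\<rceil>"
  have A: "exp (- r * N) \<le> exp r * exp (- (r * d / \<epsilon>))"
  proof -
    have "r * (d / \<epsilon> - 1) \<le> r * N" using N r by (intro mult_left_mono) auto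
    then have "exp (- r * N) \<le> exp (- r * (d / \<epsilon> - 1))" by simp
    also have "\<dots> = exp r * exp (- (r * d / \<epsilon>))"
      by (simp add: exp_add[symmetric] algebra_simps)
    finally show ?thesis .
  qed
  have "exp (- (r * d / \<epsilon>)) \<le> fact m / (r * d / \<epsilon>) ^ m"
    by (rule exp_neg_le_fact) (use e r d in simp)
  also have "fact m / (r * d / \<epsilon>) ^ m = fact m / (r * d) ^ m * \<epsilon> ^ m"
    by (simp add: power_divide)
  also have "\<epsilon> ^ m = \<epsilon> powr (real m)"
    using e by (simp add: powr_realpow)
  also have "fact m / (r * d) ^ m * \<epsilon> powr (real m) \<le> fact m / (r * d) ^ m * \<epsilon> powr q"
    by (intro mult_left_mono powr_mono') (use e q r d in \<open>auto simp: m_def\<close>)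
  finally have B: "exp (- (r * d / \<epsilon>)) \<le> fact m / (r * d) ^ m * \<epsilon> powr q" .
  have "exp (- r * N) \<le> exp r * (fact m / (r * d) ^ m * \<epsilon> powr q)"
    using A mult_left_mono[OF B, of "exp r"] by simp
  then show ?thesis by (simp add: m_def)
qed

lemma arith2:
  fixes \<epsilon> \<delta> q T B Mp :: real and m :: nat
  assumes e: "0 < \<epsilon>" "\<epsilon> \<le> 1" and T: "T = \<epsilon> powr (-\<delta>)" "2 \<le> T"
    and Mp: "Mp \<le> B / \<epsilon>^2 + 1" "0 \<le> B" and m: "q + 2 \<le> 2 * \<delta> * m"
  shows "(Mp + 1) * 2 * exp (- ((T - 1)^2 / 8)) \<le> 2 * (B + 2) * fact m * 32 ^ m * \<epsilon> powr q"
proof -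
  have e2: "\<epsilon>^2 \<le> 1" using e by (simp add: power_le_one)
  have "2 \<le> 2 / \<epsilon>^2" using e e2 by (simp add: field_simps)
  then have h1: "Mp + 1 \<le> (B + 2) / \<epsilon>^2" using Mp by (simp add: add_divide_distrib)
  have "T / 2 \<le> T - 1" using T by simp
  then have "(T/2)^2 \<le> (T - 1)^2" using T by (intro power_mono) auto
  then have "T^2 / 32 \<le> (T - 1)^2 / 8" by (simp add: power_divide)
  then have "exp (- ((T - 1)^2 / 8)) \<le> exp (- (T^2 / 32))" by simp
  also have "\<dots> \<le> fact m / (T^2/32)^m"
    by (rule exp_neg_le_fact) (use T e in simp)
  also have "\<dots> = fact m * 32^m * (1 / T^(2*m))"
    by (simp add: power_divide power_mult)
  also have "1 / T^(2*m) = \<epsilon> powr (2 * \<delta> * m)"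
  proof -
    have Tp: "0 < T" using T e by simp
    have "T^(2*m) = T powr (real (2*m))" using Tp by (simp only: powr_realpow)
    also have "\<dots> = \<epsilon> powr (-(2 * \<delta> * m))" unfolding T(1) by (simp add: powr_powr mult_ac)
    finally show ?thesis by (simp add: powr_minus divide_inverse)
  qed
  also have "\<epsilon> powr (2 * \<delta> * m) \<le> \<epsilon> powr (q + 2)"
    by (rule powr_mono') (use e m in auto)
  also have "\<epsilon> powr (q + 2) = \<epsilon> powr q * \<epsilon>^2"
    using e by (simp add: powr_add)
  finally have h2: "exp (- ((T - 1)^2 / 8)) \<le> fact m * 32^m * (\<epsilon> powr q * \<epsilon>^2)"
    by (simp add: mult_left_mono)
  have "(Mp + 1) * 2 * exp (- ((T - 1)^2 / 8)) \<le> (B + 2) / \<epsilon>^2 * 2 * (fact m * 32^m * (\<epsilon> powr q * \<epsilon>^2))"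
    by (intro mult_mono h1 h2) (use Mp e in auto)
  also have "\<dots> = 2 * (B + 2) * fact m * 32 ^ m * \<epsilon> powr q"
    using e by (simp add: field_simps)
  finally show ?thesis .
qed



lemma Lambda_props:
  assumes a: "0 < alpha_minus \<gamma>" "alpha_minus \<gamma> < alpha_plus \<gamma>" and e: "0 < \<epsilon>"
  shows "finite (Lambda \<gamma> \<epsilon>)" "\<forall>k\<in>Lambda \<gamma> \<epsilon>. 1 \<le> k"
    "\<forall>k\<in>Lambda \<gamma> \<epsilon>. real k \<le> alpha_plus \<gamma> / \<epsilon>"
    "(alpha_plus \<gamma> - alpha_minus \<gamma>) / \<epsilon> - 1 \<le> real (card (Lambda \<gamma> \<epsilon>))"
    "real (card (Lambda \<gamma> \<epsilon>)) \<le> alpha_plus \<gamma> / \<epsilon>"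
proof -
  define a b where "a = alpha_minus \<gamma>" and "b = alpha_plus \<gamma>"
  define l u where "l = nat \<lceil>a / \<epsilon>\<rceil>" and "u = nat \<lfloor>b / \<epsilon>\<rfloor>"
  have ae: "0 < a / \<epsilon>" using a e by (simp add: a_def)
  have be: "a / \<epsilon> < b / \<epsilon>" using a e by (simp add: a_def b_def divide_strict_right_mono)
  have cl: "1 \<le> \<lceil>a / \<epsilon>\<rceil>" using ae by linarith
  have fu: "0 \<le> \<lfloor>b / \<epsilon>\<rfloor>" using ae be by linarith
  have eq: "Lambda \<gamma> \<epsilon> = {l..u}"
    unfolding Lambda_def l_def u_def a_def[symmetric] b_def[symmetric] using cl fu
    by (auto simp: le_nat_iff nat_le_iff)
  show "finite (Lambda \<gamma> \<epsilon>)" unfolding eq by simp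
  have l1: "1 \<le> l" using cl unfolding l_def by linarith
  show "\<forall>k\<in>Lambda \<gamma> \<epsilon>. 1 \<le> k" unfolding eq using l1 by auto
  have ub: "real u \<le> b / \<epsilon>" unfolding u_def using fu by linarith
  show "\<forall>k\<in>Lambda \<gamma> \<epsilon>. real k \<le> alpha_plus \<gamma> / \<epsilon>"
    unfolding eq b_def[symmetric] using ub by auto
  have card: "card (Lambda \<gamma> \<epsilon>) = u + 1 - l" unfolding eq by simp
  have "real u \<ge> b / \<epsilon> - 1" unfolding u_def using fu by linarith
  moreover have "real l \<le> a / \<epsilon> + 1" unfolding l_def using cl by linarith
  moreover have "real (u + 1 - l) \<ge> real u + 1 - real l" by linarith
  ultimately show "(alpha_plus \<gamma> - alpha_minus \<gamma>) / \<epsilon> - 1 \<le> real (card (Lambda \<gamma> \<epsilon>))"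
    unfolding card a_def[symmetric] b_def[symmetric] by (simp add: diff_divide_distrib)
  have "u + 1 - l \<le> u" using l1 by linarith
  then show "real (card (Lambda \<gamma> \<epsilon>)) \<le> alpha_plus \<gamma> / \<epsilon>"
    unfolding card b_def[symmetric] using ub by linarith
qed

lemma good_eq:
  assumes fin: "finite \<Lambda>" and pos: "\<forall>k\<in>\<Lambda>. 1 \<le> k"
  shows "{\<omega> \<in> space M. Linf_norm01 (rand_f \<Lambda> (\<lambda>k. c k \<omega>)) \<le> T * L2_norm01 (rand_f \<Lambda> (\<lambda>k. c k \<omega>))}
     = {\<omega> \<in> space M. \<forall>r::rat. 0 < real_of_rat r \<longrightarrow> real_of_rat r < 1 \<longrightarrow> \<bar>\<Sum>k\<in>\<Lambda>. c k \<omega> * sqrt 2 * cos (real k * pi * real_of_rat r)\<bar> \<le> T * sqrt (\<Sum>k\<in>\<Lambda>. (c k \<omega>)^2)}"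
  unfolding L2_rand_f[OF fin pos] Linf_le_iff_rat by (auto simp: rand_f_def Rats_def)

lemma good_meas:
  assumes fin: "finite \<Lambda>" and pos: "\<forall>k\<in>\<Lambda>. 1 \<le> k"
    and cm: "\<And>k. k \<in> \<Lambda> \<Longrightarrow> c k \<in> borel_measurable M"
  shows "{\<omega> \<in> space M. Linf_norm01 (rand_f \<Lambda> (\<lambda>k. c k \<omega>)) \<le> T * L2_norm01 (rand_f \<Lambda> (\<lambda>k. c k \<omega>))} \<in> sets M"
  unfolding good_eq[OF fin pos] using cm by measurable



lemma (in prob_space) main_small:
  fixes \<gamma> \<delta> q \<epsilon> :: real
  defines "a \<equiv> alpha_minus \<gamma>" and "b \<equiv> alpha_plus \<gamma>" and "r \<equiv> (ln 3 - 1) / 2"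
  assumes ab: "0 < a" "a < b" and dq: "0 < \<delta>" "0 < q"
    and e: "0 < \<epsilon>" "\<epsilon> \<le> 1" "\<epsilon> \<le> (b - a) / 2" "2 \<le> \<epsilon> powr (-\<delta>)"
    and ind: "indep_vars (\<lambda>_. borel) c (Lambda \<gamma> \<epsilon>)"
    and dist: "\<forall>k\<in>Lambda \<gamma> \<epsilon>. distributed M lborel (c k) std_normal_density"
  shows "1 - (exp r * fact (nat \<lceil>q\<rceil>) / (r * (b - a)) ^ (nat \<lceil>q\<rceil>)
            + 2 * (sqrt 2 * pi * b^2 + 2) * fact (nat \<lceil>(q+2)/(2*\<delta>)\<rceil>) * 32 ^ (nat \<lceil>(q+2)/(2*\<delta>)\<rceil>)) * \<epsilon> powr q
     \<le> measure M {\<omega> \<in> space M.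
               Linf_norm01 (rand_f (Lambda \<gamma> \<epsilon>) (\<lambda>k. c k \<omega>))
                 \<le> \<epsilon> powr (-\<delta>) * L2_norm01 (rand_f (Lambda \<gamma> \<epsilon>) (\<lambda>k. c k \<omega>))}"
proof -
  define \<Lambda> where "\<Lambda> = Lambda \<gamma> \<epsilon>"
  define N where "N = card \<Lambda>"
  define T where "T = \<epsilon> powr (-\<delta>)"
  have ab': "0 < alpha_minus \<gamma>" "alpha_minus \<gamma> < alpha_plus \<gamma>" using ab by (simp_all add: a_def b_def)
  note LP = Lambda_props[OF ab' e(1), folded \<Lambda>_def N_def a_def b_def]
  have fin: "finite \<Lambda>" and pos: "\<forall>k\<in>\<Lambda>. 1 \<le> k" and Kb: "\<forall>k\<in>\<Lambda>. real k \<le> b / \<epsilon>"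
    and Nlow: "(b - a) / \<epsilon> - 1 \<le> real N" and Nup: "real N \<le> b / \<epsilon>" using LP by auto
  have "2 \<le> (b - a) / \<epsilon>" using e ab by (simp add: pos_le_divide_eq mult.commute)
  then have N1: "1 \<le> real N" using Nlow by linarith
  have cm[measurable]: "c k \<in> borel_measurable M" if "k \<in> \<Lambda>" for k
    using dist that distributed_measurable unfolding \<Lambda>_def by fastforce
  have r: "0 < r"
  proof -
    have "exp 1 < (3::real)" using e_less_272 by simp
    then have "ln (exp 1) < ln (3::real)" by (subst ln_less_cancel_iff) auto
    then show ?thesis by (simp add: r_def)
  qed
  define Lg where "Lg = sqrt 2 * pi * (b / \<epsilon>)^2"
  define Mg where "Mg = nat \<lceil>Lg\<rceil>"
  have Lgp: "0 < Lg" unfolding Lg_def using ab e by simp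
  have Mg1: "1 \<le> Mg" unfolding Mg_def using Lgp by linarith
  have MgL: "Lg \<le> real Mg" unfolding Mg_def by linarith
  have MgU: "real Mg \<le> (sqrt 2 * pi * b^2) / \<epsilon>^2 + 1" unfolding Mg_def Lg_def
    by (simp add: power_divide)
  have L: "real (card \<Lambda>) * (sqrt 2 * (b / \<epsilon>) * pi) \<le> real Mg"
  proof -
    have "real (card \<Lambda>) * (sqrt 2 * (b / \<epsilon>) * pi) \<le> (b / \<epsilon>) * (sqrt 2 * (b / \<epsilon>) * pi)"
      using Nup ab e by (intro mult_right_mono) (auto simp: N_def)
    also have "\<dots> = Lg" by (simp add: Lg_def power2_eq_square)
    finally show ?thesis using MgL by linarith
  qed
  define t where "t = (T - 1) * sqrt (N / 2)"
  have T2: "2 \<le> T" using e by (simp add: T_def)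
  have tp: "0 < t" unfolding t_def using T2 N1 by simp
  define w where "w j k = sqrt 2 * cos (real k * pi * (real j / real Mg))" for j k
  define A0 where "A0 = {\<omega>\<in>space M. (\<Sum>k\<in>\<Lambda>. (c k \<omega>)^2) \<le> N / 2}"
  define A1 where "A1 j = {\<omega>\<in>space M. t \<le> (\<Sum>k\<in>\<Lambda>. w j k * c k \<omega>)}" for j
  define A2 where "A2 j = {\<omega>\<in>space M. t \<le> (\<Sum>k\<in>\<Lambda>. (- w j k) * c k \<omega>)}" for j
  define good where "good = {\<omega> \<in> space M.
               Linf_norm01 (rand_f \<Lambda> (\<lambda>k. c k \<omega>)) \<le> T * L2_norm01 (rand_f \<Lambda> (\<lambda>k. c k \<omega>))}"
  have good_sets: "good \<in> sets M" unfolding good_def by (rule good_meas[OF fin pos cm])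
  have A0s: "A0 \<in> sets M" unfolding A0_def by measurable
  have A1s: "A1 j \<in> sets M" for j unfolding A1_def by measurable
  have A2s: "A2 j \<in> sets M" for j unfolding A2_def by measurable
  have sub: "space M - good \<subseteq> A0 \<union> (\<Union>j\<in>{..Mg}. A1 j \<union> A2 j)"
  proof
    fix \<omega> assume \<omega>: "\<omega> \<in> space M - good"
    show "\<omega> \<in> A0 \<union> (\<Union>j\<in>{..Mg}. A1 j \<union> A2 j)"
    proof (rule ccontr)
      assume nb: "\<omega> \<notin> A0 \<union> (\<Union>j\<in>{..Mg}. A1 j \<union> A2 j)"
      define nrm where "nrm = sqrt (\<Sum>k\<in>\<Lambda>. (c k \<omega>)^2)"
      have "N / 2 < (\<Sum>k\<in>\<Lambda>. (c k \<omega>)^2)" using nb \<omega> by (auto simp: A0_def)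
      then have "sqrt (N / 2) \<le> nrm" unfolding nrm_def by (simp add: real_sqrt_le_mono)
      then have tn: "t \<le> (T - 1) * nrm" unfolding t_def using T2 by (intro mult_left_mono) auto
      have H: "\<forall>j\<le>Mg. \<bar>rand_f \<Lambda> (\<lambda>k. c k \<omega>) (real j / real Mg)\<bar> \<le> (T - 1) * nrm"
      proof (intro allI impI)
        fix j assume j: "j \<le> Mg"
        have eqS: "rand_f \<Lambda> (\<lambda>k. c k \<omega>) (real j / real Mg) = (\<Sum>k\<in>\<Lambda>. w j k * c k \<omega>)"
          unfolding rand_f_def w_def by (simp add: mult_ac)
        have n1: "\<omega> \<notin> A1 j" "\<omega> \<notin> A2 j" using nb j by auto
        have "(\<Sum>k\<in>\<Lambda>. w j k * c k \<omega>) < t" using n1 \<omega> by (auto simp: A1_def not_le)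
        moreover have "(\<Sum>k\<in>\<Lambda>. (- w j k) * c k \<omega>) < t" using n1 \<omega> by (auto simp: A2_def not_le)
        then have "- (\<Sum>k\<in>\<Lambda>. w j k * c k \<omega>) < t" by (simp add: sum_negf)
        ultimately show "\<bar>rand_f \<Lambda> (\<lambda>k. c k \<omega>) (real j / real Mg)\<bar> \<le> (T - 1) * nrm"
          unfolding eqS using tn by linarith
      qed
      have "\<forall>x\<in>{0<..<1}. \<bar>rand_f \<Lambda> (\<lambda>k. c k \<omega>) x\<bar> \<le> (T - 1) * nrm + nrm"
        using grid_bound[OF fin Kb _ Mg1 L H] ab e unfolding nrm_def by simp
      then have "Linf_norm01 (rand_f \<Lambda> (\<lambda>k. c k \<omega>)) \<le> T * nrm"
        unfolding Linf_le_iff by (simp add: algebra_simps)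
      then have "\<omega> \<in> good" using \<omega> unfolding good_def nrm_def L2_rand_f[OF fin pos] by auto
      then show False using \<omega> by auto
    qed
  qed
  have "measure M (space M - good) \<le> measure M (A0 \<union> (\<Union>j\<in>{..Mg}. A1 j \<union> A2 j))"
    by (rule finite_measure_mono[OF sub]) (use A0s A1s A2s in auto)
  also have "\<dots> \<le> measure M A0 + measure M (\<Union>j\<in>{..Mg}. A1 j \<union> A2 j)"
    by (rule measure_Un_le) (use A0s A1s A2s in auto)
  also have "measure M (\<Union>j\<in>{..Mg}. A1 j \<union> A2 j) \<le> (\<Sum>j\<in>{..Mg}. measure M (A1 j \<union> A2 j))"
    by (rule finite_measure_subadditive_finite) (use A1s A2s in auto)
  also have "\<dots> \<le> (\<Sum>j\<in>{..Mg}. measure M (A1 j) + measure M (A2 j))"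
    by (intro sum_mono measure_Un_le A1s A2s)
  also have "\<dots> \<le> (\<Sum>j\<in>{..Mg}. exp (-(t^2)/(2*(2*real N))) + exp (-(t^2)/(2*(2*real N))))"
  proof (intro sum_mono add_mono)
    fix j
    have ws: "(\<Sum>k\<in>\<Lambda>. (w j k)^2) \<le> 2 * real N"
    proof -
      have "(\<Sum>k\<in>\<Lambda>. (w j k)^2) \<le> (\<Sum>k\<in>\<Lambda>. 2)"
        by (intro sum_mono) (simp add: w_def power_mult_distrib cos_squared_eq)
      then show ?thesis by (simp add: N_def)
    qed
    show "measure M (A1 j) \<le> exp (-(t^2)/(2*(2*real N)))"
      unfolding A1_def by (rule gauss_tail[OF fin ind[folded \<Lambda>_def] dist[folded \<Lambda>_def] ws _ tp]) (use N1 in simp)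
    show "measure M (A2 j) \<le> exp (-(t^2)/(2*(2*real N)))"
      unfolding A2_def by (rule gauss_tail[OF fin ind[folded \<Lambda>_def] dist[folded \<Lambda>_def] _ _ tp]) (use ws N1 in simp_all)
  qed
  also have "(\<Sum>j\<in>{..Mg}. exp (-(t^2)/(2*(2*real N))) + exp (-(t^2)/(2*(2*real N)))) = (real Mg + 1) * 2 * exp (- ((T - 1)^2 / 8))"
  proof -
    have "t^2 = (T - 1)^2 * (real N / 2)"
      unfolding t_def by (simp add: power_mult_distrib)
    then have "t^2/(2*(2*real N)) = (T - 1)^2 / 8"
      using N1 by (simp add: field_simps)
    then have "exp (-(t^2)/(2*(2*real N))) = exp (- ((T - 1)^2 / 8))"
      by (metis minus_divide_left)
    then show ?thesis by (simp only:) (simp add: algebra_simps)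
  qed
  finally have bad: "measure M (space M - good) \<le> measure M A0 + (real Mg + 1) * 2 * exp (- ((T - 1)^2 / 8))"
    by simp
  have A0b: "measure M A0 \<le> exp (- r * N)"
    using chi_lower[OF fin ind[folded \<Lambda>_def] dist[folded \<Lambda>_def]] unfolding A0_def N_def r_def by simp
  also have "\<dots> \<le> exp r * fact (nat \<lceil>q\<rceil>) / (r * (b - a)) ^ (nat \<lceil>q\<rceil>) * \<epsilon> powr q"
    by (rule arith1) (use e r ab Nlow dq in auto)
  finally have A0b: "measure M A0 \<le> exp r * fact (nat \<lceil>q\<rceil>) / (r * (b - a)) ^ (nat \<lceil>q\<rceil>) * \<epsilon> powr q" .
  have m2: "q + 2 \<le> 2 * \<delta> * real (nat \<lceil>(q+2)/(2*\<delta>)\<rceil>)"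
  proof -
    have "(q+2)/(2*\<delta>) \<le> real (nat \<lceil>(q+2)/(2*\<delta>)\<rceil>)" by linarith
    then have "2 * \<delta> * ((q+2)/(2*\<delta>)) \<le> 2 * \<delta> * real (nat \<lceil>(q+2)/(2*\<delta>)\<rceil>)"
      using dq by (intro mult_left_mono) auto
    then show ?thesis using dq by simp
  qed
  have Gb: "(real Mg + 1) * 2 * exp (- ((T - 1)^2 / 8)) \<le> 2 * (sqrt 2 * pi * b^2 + 2) * fact (nat \<lceil>(q+2)/(2*\<delta>)\<rceil>) * 32 ^ (nat \<lceil>(q+2)/(2*\<delta>)\<rceil>) * \<epsilon> powr q"
    by (rule arith2[OF e(1,2) T_def T2 MgU _ m2]) simp
  have "prob good = 1 - prob (space M - good)"
    using prob_compl[OF good_sets] by simp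
  then show ?thesis
    using bad A0b Gb unfolding good_def \<Lambda>_def T_def by (simp add: algebra_simps)
qed



lemma alpha_props:
  assumes "0 < \<gamma>" "\<gamma> < 1"
  shows "0 < alpha_minus \<gamma>" "alpha_minus \<gamma> < alpha_plus \<gamma>"
proof -
  have s1: "sqrt (1 - \<gamma>) < 1" using assms by simp
  have s0: "0 < sqrt (1 - \<gamma>)" using assms by simp
  show "0 < alpha_minus \<gamma>" unfolding alpha_minus_def using s1 by simp
  have "(1 - sqrt (1 - \<gamma>)) / (2 * pi^2) < (1 + sqrt (1 - \<gamma>)) / (2 * pi^2)"
    using s0 by (intro divide_strict_right_mono) auto
  then show "alpha_minus \<gamma> < alpha_plus \<gamma>" unfolding alpha_minus_def alpha_plus_def
    by simp
qed

theorem theorem2p6: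
  fixes \<gamma> \<delta> q :: real
  assumes "0 < \<gamma>" "\<gamma> < 1" "0 < \<delta>" "1 < q"
  shows "\<exists>C>0. \<forall>(\<epsilon>::real) (M::'a measure) (c::nat \<Rightarrow> 'a \<Rightarrow> real).
           0 < \<epsilon> \<longrightarrow> prob_space M \<longrightarrow>
           prob_space.indep_vars M (\<lambda>_. borel) c (Lambda \<gamma> \<epsilon>) \<longrightarrow>
           (\<forall>k\<in>Lambda \<gamma> \<epsilon>. distributed M lborel (c k) std_normal_density) \<longrightarrow>
           measure M {\<omega> \<in> space M.
               Linf_norm01 (rand_f (Lambda \<gamma> \<epsilon>) (\<lambda>k. c k \<omega>))
                 \<le> \<epsilon> powr (-\<delta>) * L2_norm01 (rand_f (Lambda \<gamma> \<epsilon>) (\<lambda>k. c k \<omega>))}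
             \<ge> 1 - C * \<epsilon> powr q"
proof -
  define a where "a = alpha_minus \<gamma>"
  define b where "b = alpha_plus \<gamma>"
  define r :: real where "r = (ln 3 - 1) / 2"
  define C0 where "C0 = exp r * fact (nat \<lceil>q\<rceil>) / (r * (b - a)) ^ (nat \<lceil>q\<rceil>)
            + 2 * (sqrt 2 * pi * b^2 + 2) * fact (nat \<lceil>(q+2)/(2*\<delta>)\<rceil>) * 32 ^ (nat \<lceil>(q+2)/(2*\<delta>)\<rceil>)"
  have ab: "0 < a" "a < b" using alpha_props[OF assms(1,2)] by (simp_all add: a_def b_def)
  define e0 where "e0 = min 1 (min ((b - a) / 2) (2 powr (-1/\<delta>)))"
  have e0p: "0 < e0" unfolding e0_def using ab by simp
  define C where "C = max C0 (e0 powr (-q))"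
  have Cp: "0 < C" unfolding C_def using e0p by (simp add: less_max_iff_disj)
  show ?thesis
  proof (intro exI[of _ C] conjI allI impI Cp)
    fix \<epsilon> :: real and M :: "'a measure" and c :: "nat \<Rightarrow> 'a \<Rightarrow> real"
    assume e: "0 < \<epsilon>" and ps: "prob_space M"
      and ind: "prob_space.indep_vars M (\<lambda>_. borel) c (Lambda \<gamma> \<epsilon>)"
      and dist: "\<forall>k\<in>Lambda \<gamma> \<epsilon>. distributed M lborel (c k) std_normal_density"
    interpret prob_space M by (rule ps)
    show "1 - C * \<epsilon> powr q \<le> measure M {\<omega> \<in> space M.
               Linf_norm01 (rand_f (Lambda \<gamma> \<epsilon>) (\<lambda>k. c k \<omega>))
                 \<le> \<epsilon> powr (-\<delta>) * L2_norm01 (rand_f (Lambda \<gamma> \<epsilon>) (\<lambda>k. c k \<omega>))}"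
    proof (cases "\<epsilon> \<le> e0")
      case True
      have e1: "\<epsilon> \<le> 1" "\<epsilon> \<le> (b - a) / 2" "\<epsilon> \<le> 2 powr (-1/\<delta>)" using True by (auto simp: e0_def)
      have "(2 powr (-1/\<delta>)) powr (-\<delta>) \<le> \<epsilon> powr (-\<delta>)"
        by (rule powr_mono2') (use e e1 assms in auto)
      moreover have "(2 powr (-1/\<delta>)) powr (-\<delta>) = 2"
        using assms by (simp add: powr_powr)
      ultimately have e2: "2 \<le> \<epsilon> powr (-\<delta>)" by simp
      have "1 - C0 * \<epsilon> powr q \<le> measure M {\<omega> \<in> space M.
               Linf_norm01 (rand_f (Lambda \<gamma> \<epsilon>) (\<lambda>k. c k \<omega>))
                 \<le> \<epsilon> powr (-\<delta>) * L2_norm01 (rand_f (Lambda \<gamma> \<epsilon>) (\<lambda>k. c k \<omega>))}"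
        unfolding C0_def r_def a_def b_def
        by (rule main_small) (use ab assms e e1 e2 ind dist in \<open>auto simp: a_def b_def\<close>)
      moreover have "C0 * \<epsilon> powr q \<le> C * \<epsilon> powr q"
        unfolding C_def by (intro mult_right_mono) auto
      ultimately show ?thesis by linarith
    next
      case False
      have "e0 powr q \<le> \<epsilon> powr q" using False e0p assms by (intro powr_mono2) auto
      then have "e0 powr (-q) * e0 powr q \<le> C * \<epsilon> powr q"
        using Cp unfolding C_def by (intro mult_mono) auto
      moreover have "e0 powr (-q) * e0 powr q = 1" using e0p by (simp add: powr_minus)
      ultimately have "1 - C * \<epsilon> powr q \<le> 0" by simp
      then show ?thesis using measure_nonneg by (meson order_trans)
    qed
  qed
qed


end
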